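(* Let $a,b,c$ be nonnegative integers such that $s=a+b+c-d$ is positive. Then in $\mathcal{B}_d$: $$f^{(a)}\binom{H_2}{b}e^{(c)}=\sum_{k=s}^{\min(a,c)}(-1)^{k-s}\binom{k-1}{s-1}\binom{b+k}{k}f^{(a-k)}\binom{H_2}{b+k}e^{(c-k)},$$ $$e^{(a)}\binom{H_1}{b}f^{(c)}=\sum_{k=s}^{\min(a,c)}(-1)^{k-s}\binom{k-1}{s-1}\binom{b+k}{k}e^{(a-k)}\binom{H_1}{b+k}f^{(c-k)}$$ (an empty sum being $0$).
   Context: Fix an integer $d\ge 0$. $\mathcal{B}_d$ is the associative $\mathbb{Q}$-algebra with $1$ generated by $e,f,H_1,H_2$ subject to the relations $H_1H_2=H_2H_1$, $H_1e-eH_1=e$, $H_1f-fH_1=-f$, $H_2e-eH_2=-e$, $H_2f-fH_2=f$, $ef-fe=H_1-H_2$, $H_1+H_2=d$, and $H_1(H_1-1)\cdots(H_1-d)=0$. For an element $T$ and integer $m\ge 0$, $T^{(m)}=T^m/m!$ and $\binom{T}{m}=T(T-1)\cdots(T-m+1)/m!$; both are defined to be $0$ for negative $m$. *)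

theory Defs
  imports Main
begin

text \<open>A unital ring is a Q-algebra iff every positive natural number is invertible
  (the map Q -> A is then unique and lands in the centre).\<close>
definition rat_algebra :: "'a::ring_1 itself \<Rightarrow> bool" where
  "rat_algebra _ \<longleftrightarrow> (\<forall>n::nat. n > 0 \<longrightarrow>
     (\<exists>y::'a. of_nat n * y = 1 \<and> y * of_nat n = 1))"

definition nat_inv :: "nat \<Rightarrow> 'a::ring_1" where
  "nat_inv n = (SOME y. of_nat n * y = 1 \<and> y * of_nat n = 1)"

definition dpow :: "'a::ring_1 \<Rightarrow> nat \<Rightarrow> 'a" where
  "dpow T m = nat_inv (fact m) * T ^ m"

definition binomT :: "'a::ring_1 \<Rightarrow> nat \<Rightarrow> 'a" where
  "binomT T m = nat_inv (fact m) * prod_list (map (\<lambda>i. T - of_nat i) [0..<m])"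

definition Bd_rel :: "nat \<Rightarrow> 'a::ring_1 \<Rightarrow> 'a \<Rightarrow> 'a \<Rightarrow> 'a \<Rightarrow> bool" where
  "Bd_rel d e f H1 H2 \<longleftrightarrow>
     H1 * H2 = H2 * H1 \<and>
     H1 * e - e * H1 = e \<and> H1 * f - f * H1 = - f \<and>
     H2 * e - e * H2 = - e \<and> H2 * f - f * H2 = f \<and>
     e * f - f * e = H1 - H2 \<and> H1 + H2 = of_nat d \<and>
     prod_list (map (\<lambda>i. H1 - of_nat i) [0..<Suc d]) = 0"

end

theory Submission
  imports Defs "HOL-Computational_Algebra.Formal_Power_Series"
begin

lemma ni:
  assumes "rat_algebra TYPE('a::ring_1)" "n > 0"
  shows "of_nat n * (nat_inv n :: 'a) = 1" "(nat_inv n :: 'a) * of_nat n = 1"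
proof -
  have "\<exists>y::'a. of_nat n * y = 1 \<and> y * of_nat n = 1"
    using assms unfolding rat_algebra_def by blast
  then have "of_nat n * (nat_inv n :: 'a) = 1 \<and> (nat_inv n :: 'a) * of_nat n = 1"
    unfolding nat_inv_def by (rule someI_ex)
  then show "of_nat n * (nat_inv n :: 'a) = 1" "(nat_inv n :: 'a) * of_nat n = 1" by auto
qed

lemma ni_central:
  assumes "rat_algebra TYPE('a::ring_1)" "n > 0"
  shows "(nat_inv n :: 'a) * x = x * nat_inv n"
proof -
  let ?y = "nat_inv n :: 'a"
  have "?y * x = ?y * x * (of_nat n * ?y)" using ni[OF assms] by simp
  also have "\<dots> = ?y * (x * of_nat n) * ?y" by (simp add: mult.assoc)
  also have "\<dots> = ?y * (of_nat n * x) * ?y" by (simp add: mult_of_nat_commute)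
  also have "\<dots> = (?y * of_nat n) * x * ?y" by (simp add: mult.assoc)
  also have "\<dots> = x * ?y" using ni[OF assms] by simp
  finally show ?thesis .
qed

lemma nat_cancel:
  assumes "rat_algebra TYPE('a::ring_1)" "n > 0" "of_nat n * (w::'a) = 0"
  shows "w = 0"
proof -
  have "w = (nat_inv n * of_nat n) * w" using ni[OF assms(1,2)] by simp
  also have "\<dots> = nat_inv n * (of_nat n * w)" by (simp add: mult.assoc)
  finally show ?thesis using assms(3) by simp
qed


lemma int_cancel:
  assumes "rat_algebra TYPE('a::ring_1)" "z \<noteq> 0" "of_int z * (w::'a) = 0"
  shows "w = 0"
proof (cases "z \<ge> 0")
  case True
  then have "of_nat (nat z) * w = 0" using assms(3) by simp
  moreover have "nat z > 0" using assms(2) True by simp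
  ultimately show ?thesis using nat_cancel[OF assms(1), of "nat z" w] by blast
next
  case False
  then have "of_int z = - (of_nat (nat (- z)) :: 'a)" by simp
  then have "of_nat (nat (- z)) * w = 0" using assms(3) by simp
  moreover have "nat (- z) > 0" using False by simp
  ultimately show ?thesis using nat_cancel[OF assms(1), of "nat (- z)" w] by blast
qed

lemma ni_suc:
  assumes "rat_algebra TYPE('a::ring_1)"
  shows "of_nat (Suc x) * (nat_inv (fact (Suc x)) :: 'a) = nat_inv (fact x)"
proof -
  let ?y = "nat_inv (fact (Suc x)) :: 'a" and ?z = "nat_inv (fact x) :: 'a"
  have fx: "(fact (Suc x) :: nat) > 0" "(fact x :: nat) > 0" by auto
  have e1: "(of_nat (fact (Suc x)) :: 'a) * ?y = 1" by (rule ni(1)[OF assms fx(1)])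
  have e2: "?z * (of_nat (fact x) :: 'a) = 1" by (rule ni(2)[OF assms fx(2)])
  have ff: "fact (Suc x) = Suc x * (fact x :: nat)" by (simp only: fact_Suc of_nat_id)
  have e3: "(of_nat (fact (Suc x)) :: 'a) = of_nat (fact x) * of_nat (Suc x)"
    unfolding ff of_nat_mult by (rule mult_of_nat_commute)
  have 1: "of_nat (fact x) * (of_nat (Suc x) * ?y) = 1"
    using e1 unfolding e3 by (simp only: mult.assoc)
  have "?z = ?z * (of_nat (fact x) * (of_nat (Suc x) * ?y))" by (simp only: 1 mult_1_right)
  also have "\<dots> = (?z * of_nat (fact x)) * (of_nat (Suc x) * ?y)" by (simp only: mult.assoc)
  also have "\<dots> = of_nat (Suc x) * ?y" by (simp only: e2 mult_1_left)
  finally show ?thesis by (rule sym)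
qed

lemma nat_inv_1: "nat_inv 1 = (1::'a::ring_1)"
proof -
  have "(\<lambda>y::'a. of_nat 1 * y = 1 \<and> y * of_nat 1 = 1) = (\<lambda>y. y = 1)" by (rule ext) auto
  then show ?thesis unfolding nat_inv_def by (simp only: some_eq_trivial)
qed

lemma dpow_0[simp]: "dpow T 0 = (1::'a::ring_1)"
  unfolding dpow_def by (simp only: fact_0 nat_inv_1 power_0 mult_1_left)

lemma ni_fact_central:
  assumes "rat_algebra TYPE('a::ring_1)"
  shows "(nat_inv (fact x) :: 'a) * T = T * nat_inv (fact x)"
  by (rule ni_central[OF assms]) (rule fact_gt_zero)

lemma dpow_Suc:
  assumes "rat_algebra TYPE('a::ring_1)"
  shows "(T::'a) * dpow T x = of_nat (Suc x) * dpow T (Suc x)"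
proof -
  have c: "(nat_inv (fact x) :: 'a) * T = T * nat_inv (fact x)" by (rule ni_fact_central[OF assms])
  have "T * dpow T x = (T * nat_inv (fact x)) * T ^ x"
    unfolding dpow_def by (rule mult.assoc[symmetric])
  also have "\<dots> = (nat_inv (fact x) * T) * T ^ x" by (simp only: c)
  also have "\<dots> = nat_inv (fact x) * T ^ Suc x" by (simp only: mult.assoc power_Suc)
  also have "\<dots> = (of_nat (Suc x) * nat_inv (fact (Suc x))) * T ^ Suc x" by (simp only: ni_suc[OF assms])
  also have "\<dots> = of_nat (Suc x) * dpow T (Suc x)" unfolding dpow_def by (rule mult.assoc)
  finally show ?thesis .
qed

lemma dpow_comm:
  assumes "rat_algebra TYPE('a::ring_1)"
  shows "dpow (T::'a) x * T = T * dpow T x"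
proof -
  have c: "(nat_inv (fact x) :: 'a) * T = T * nat_inv (fact x)" by (rule ni_fact_central[OF assms])
  have "dpow T x * T = nat_inv (fact x) * (T ^ x * T)" unfolding dpow_def by (rule mult.assoc)
  also have "\<dots> = (nat_inv (fact x) * T) * T ^ x" by (simp only: mult.assoc power_commutes)
  also have "\<dots> = (T * nat_inv (fact x)) * T ^ x" by (simp only: c)
  also have "\<dots> = T * dpow T x" unfolding dpow_def by (rule mult.assoc)
  finally show ?thesis .
qed

lemma sc_int: "(x::'a::ring_1) * (of_int c * v) = of_int c * (x * v)"
proof -
  have "x * (of_int c * v) = (x * of_int c) * v" by (rule mult.assoc[symmetric])
  also have "x * of_int c = of_int c * x" by (rule mult_of_int_commute[symmetric])
  finally show ?thesis by (simp only: mult.assoc)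
qed

lemma sc_nat: "(x::'a::ring_1) * (of_nat c * v) = of_nat c * (x * v)"
  using sc_int[of x "int c" v] by simp

lemma prod_eig:
  fixes T v :: "'a::ring_1"
  assumes "T * v = of_int z * v"
  shows "prod_list (map (\<lambda>i. T - of_nat i) [0..<b]) * v = of_int (\<Prod>i<b. z - int i) * v"
proof (induction b)
  case 0
  then show ?case by simp
next
  case (Suc b)
  have "prod_list (map (\<lambda>i. T - of_nat i) [0..<Suc b]) * v
      = prod_list (map (\<lambda>i. T - of_nat i) [0..<b]) * ((T - of_nat b) * v)"
    by (simp add: mult.assoc)
  also have "(T - of_nat b) * v = of_int (z - int b) * v"
    using assms by (simp add: algebra_simps)
  also have "prod_list (map (\<lambda>i. T - of_nat i) [0..<b]) * (of_int (z - int b) * v)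
      = of_int (z - int b) * (prod_list (map (\<lambda>i. T - of_nat i) [0..<b]) * v)"
    by (rule sc_int)
  also have "\<dots> = of_int ((\<Prod>i<Suc b. z - int i)) * v"
    unfolding Suc.IH by (simp add: mult.assoc[symmetric] mult.commute)
  finally show ?case .
qed

locale sl =
  fixes e f H1 H2 :: "'a::ring_1" and d :: nat
  assumes ra: "rat_algebra TYPE('a)"
  and c1: "H1 * e - e * H1 = e" and c2: "H1 * f - f * H1 = - f"
  and c5: "e * f - f * e = H1 - H2" and c6: "H1 + H2 = of_nat d"
  and van: "\<And>w z. H1 * w = of_int z * w \<Longrightarrow> z < 0 \<or> z > int d \<Longrightarrow> w = 0"
  and sep: "\<And>X. (\<And>z w. H1 * w = of_int z * w \<Longrightarrow> X * w = 0) \<Longrightarrow> X = 0"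
begin

definition eig :: "int \<Rightarrow> 'a \<Rightarrow> bool" where
  "eig z w \<longleftrightarrow> H1 * w = of_int z * w"

abbreviation F where "F \<equiv> dpow f"
abbreviation E where "E \<equiv> dpow e"

lemma H1e: "H1 * e = e * H1 + e" using c1 by (simp add: algebra_simps)
lemma H1f: "H1 * f = f * H1 - f" using c2 by (simp add: algebra_simps)
lemma H2d: "H2 = of_nat d - H1" using c6 by (simp add: algebra_simps)
lemma ef: "e * f = f * e + H1 - H2" using c5 by (simp add: algebra_simps)

lemma eig_e: "eig z w \<Longrightarrow> eig (z + 1) (e * w)"
  unfolding eig_def
proof -
  assume a: "H1 * w = of_int z * w"
  have "H1 * (e * w) = (e * H1 + e) * w" by (simp only: mult.assoc[symmetric] H1e)
  also have "\<dots> = e * (H1 * w) + e * w" by (simp only: distrib_right mult.assoc)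
  also have "\<dots> = of_int z * (e * w) + e * w" by (simp only: a sc_int[of e])
  also have "\<dots> = of_int (z + 1) * (e * w)" by (simp only: of_int_add of_int_1 distrib_right mult_1_left)
  finally show "H1 * (e * w) = of_int (z + 1) * (e * w)" .
qed

lemma eig_f: "eig z w \<Longrightarrow> eig (z - 1) (f * w)"
  unfolding eig_def
proof -
  assume a: "H1 * w = of_int z * w"
  have "H1 * (f * w) = (f * H1 - f) * w" by (simp only: mult.assoc[symmetric] H1f)
  also have "\<dots> = f * (H1 * w) - f * w" by (simp only: left_diff_distrib mult.assoc)
  also have "\<dots> = of_int z * (f * w) - f * w" by (simp only: a sc_int[of f])
  also have "\<dots> = of_int (z - 1) * (f * w)" by (simp only: of_int_diff of_int_1 left_diff_distrib mult_1_left)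
  finally show "H1 * (f * w) = of_int (z - 1) * (f * w)" .
qed

lemma eig_ni: "eig z w \<Longrightarrow> eig z (nat_inv (fact n) * w)"
  unfolding eig_def
proof -
  assume a: "H1 * w = of_int z * w"
  have "H1 * (nat_inv (fact n) * w) = (H1 * nat_inv (fact n)) * w" by (rule mult.assoc[symmetric])
  also have "H1 * nat_inv (fact n) = nat_inv (fact n) * H1" by (rule ni_fact_central[OF ra, symmetric])
  also have "nat_inv (fact n) * H1 * w = nat_inv (fact n) * (of_int z * w)" by (simp only: mult.assoc a)
  also have "\<dots> = of_int z * (nat_inv (fact n) * w)" by (rule sc_int)
  finally show "H1 * (nat_inv (fact n) * w) = of_int z * (nat_inv (fact n) * w)" .
qed

lemma eig_int: "eig z w \<Longrightarrow> eig z (of_int c * w)"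
  unfolding eig_def
proof -
  assume a: "H1 * w = of_int z * w"
  have "H1 * (of_int c * w) = of_int c * (H1 * w)" by (rule sc_int)
  also have "\<dots> = of_int c * (of_int z * w)" by (simp only: a)
  also have "\<dots> = of_int z * (of_int c * w)" by (rule sc_int[symmetric])
  finally show "H1 * (of_int c * w) = of_int z * (of_int c * w)" .
qed

lemma eig_nat: "eig z w \<Longrightarrow> eig z (of_nat c * w)"
  using eig_int[of z w "int c"] by (simp only: of_int_of_nat_eq)

lemma eig_add: "eig z w \<Longrightarrow> eig z v \<Longrightarrow> eig z (w + v)"
  unfolding eig_def by (simp only: distrib_left)

lemma eig_diff: "eig z w \<Longrightarrow> eig z v \<Longrightarrow> eig z (w - v)"
  unfolding eig_def by (simp only: right_diff_distrib)

lemma eig_pe: "eig z w \<Longrightarrow> eig (z + int y) (e ^ y * w)"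
proof (induction y)
  case 0 then show ?case by simp
next
  case (Suc y)
  have "eig (z + int y + 1) (e * (e ^ y * w))" using eig_e Suc by blast
  moreover have "z + int y + 1 = z + int (Suc y)" by simp
  ultimately show ?case by (simp only: power_Suc mult.assoc)
qed

lemma eig_pf: "eig z w \<Longrightarrow> eig (z - int y) (f ^ y * w)"
proof (induction y)
  case 0 then show ?case by simp
next
  case (Suc y)
  have "eig (z - int y - 1) (f * (f ^ y * w))" using eig_f Suc by blast
  moreover have "z - int y - 1 = z - int (Suc y)" by simp
  ultimately show ?case by (simp only: power_Suc mult.assoc)
qed

lemma eig_E: "eig z w \<Longrightarrow> eig (z + int y) (E y * w)"
  unfolding dpow_def using eig_pe eig_ni by (simp only: mult.assoc)

lemma eig_F: "eig z w \<Longrightarrow> eig (z - int y) (F y * w)"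
  unfolding dpow_def using eig_pf eig_ni by (simp only: mult.assoc)

lemma eig_van: "eig z w \<Longrightarrow> z < 0 \<or> z > int d \<Longrightarrow> w = 0"
  unfolding eig_def using van by blast

lemma E_van: "eig z w \<Longrightarrow> z + int y > int d \<Longrightarrow> E y * w = 0"
  using eig_E eig_van by blast

lemma F_van: "eig z w \<Longrightarrow> int x > z \<Longrightarrow> F x * w = 0"
proof -
  assume "eig z w" "int x > z"
  then have "eig (z - int x) (F x * w)" "z - int x < 0" using eig_F by auto
  then show ?thesis using eig_van by blast
qed

lemma eig_H2: "eig z w \<Longrightarrow> H2 * w = of_int (int d - z) * w"
  unfolding eig_def H2d by (simp add: left_diff_distrib)

lemma fF: "f * F x = of_nat (Suc x) * F (Suc x)" by (rule dpow_Suc[OF ra])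
lemma eE: "e * E x = of_nat (Suc x) * E (Suc x)" by (rule dpow_Suc[OF ra])
lemma Ee: "E x * e = e * E x" by (rule dpow_comm[OF ra])

end

lemma lin_add: "of_int a * X + of_int b * X = (of_int (a + b) :: 'a::ring_1) * X"
  by (simp only: of_int_add distrib_right)
lemma lin_diff: "of_int a * X - of_int b * X = (of_int (a - b) :: 'a::ring_1) * X"
  by (simp only: of_int_diff left_diff_distrib)
lemma lin_mult: "of_int a * (of_int b * X) = (of_int (a * b) :: 'a::ring_1) * X"
  by (simp only: of_int_mult mult.assoc)
lemma lin_nat: "of_nat n * X = (of_int (int n) :: 'a::ring_1) * X"
  by (simp only: of_int_of_nat_eq)
lemma lin_cong: "a = b \<Longrightarrow> (of_int a :: 'a::ring_1) * X = of_int b * X"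
  by simp

context sl
begin

lemma F1: "F (Suc 0) = f"
  using fF[of 0] by simp

lemma E1: "E (Suc 0) = e"
  using eE[of 0] by simp

lemma ef_eig: "eig z v \<Longrightarrow> e * (f * v) = f * (e * v) + of_int (2 * z - int d) * v"
proof -
  assume a: "eig z v"
  have "e * (f * v) = (f * e + H1 - H2) * v" by (simp only: mult.assoc[symmetric] ef)
  also have "\<dots> = f * (e * v) + (H1 * v - H2 * v)" by (simp only: distrib_right left_diff_distrib mult.assoc add_diff_eq)
  also have "H1 * v - H2 * v = of_int z * v - of_int (int d - z) * v"
    using a eig_H2[OF a] unfolding eig_def by simp
  also have "\<dots> = of_int (2 * z - int d) * v" by (simp only: lin_diff) simp
  finally show ?thesis .
qed

lemma fe_eig: "eig z v \<Longrightarrow> f * (e * v) = e * (f * v) - of_int (2 * z - int d) * v"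
  using ef_eig by (simp add: algebra_simps)

lemma cancel_nat: "n > 0 \<Longrightarrow> of_nat n * (X::'a) = of_nat n * Y \<Longrightarrow> X = Y"
proof -
  assume "n > 0" "of_nat n * X = of_nat n * Y"
  then have "of_nat n * (X - Y) = 0" by (simp add: right_diff_distrib)
  then have "X - Y = 0" by (rule nat_cancel[OF ra \<open>n > 0\<close>])
  then show "X = Y" by simp
qed

lemma comm_eF:
  "eig z w \<Longrightarrow> e * (F (Suc x) * w) = F (Suc x) * (e * w) + of_int (2 * z - int d - int x) * (F x * w)"
proof (induction x)
  case 0
  then show ?case using ef_eig[OF 0] by (simp add: F1)
next
  case (Suc x)
  let ?v = "F (Suc x) * w"
  let ?A = "F (Suc (Suc x)) * (e * w)"
  let ?c = "2 * z - int d - int x"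
  have ev: "eig (z - int (Suc x)) ?v" using eig_F Suc.prems by blast
  have s1: "f * ?v = of_nat (Suc (Suc x)) * (F (Suc (Suc x)) * w)"
    by (simp only: mult.assoc[symmetric] fF)
  have "of_nat (Suc (Suc x)) * (e * (F (Suc (Suc x)) * w)) = e * (f * ?v)"
    by (simp only: s1 sc_nat)
  also have "\<dots> = f * (e * ?v) + of_int (2 * (z - int (Suc x)) - int d) * ?v"
    by (rule ef_eig[OF ev])
  also have "f * (e * ?v) = f * (F (Suc x) * (e * w)) + of_int ?c * (f * (F x * w))"
    by (simp only: Suc.IH[OF Suc.prems] distrib_left sc_int[of f])
  also have "\<dots> = of_nat (Suc (Suc x)) * ?A + of_int ?c * (of_nat (Suc x) * ?v)"
    by (simp only: mult.assoc[symmetric] fF)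
  finally have 1: "of_nat (Suc (Suc x)) * (e * (F (Suc (Suc x)) * w)) =
      of_nat (Suc (Suc x)) * ?A + (of_int ?c * (of_nat (Suc x) * ?v) + of_int (2 * (z - int (Suc x)) - int d) * ?v)"
    by (simp only: add.assoc)
  have 2: "of_int ?c * (of_nat (Suc x) * ?v) + of_int (2 * (z - int (Suc x)) - int d) * ?v
      = of_nat (Suc (Suc x)) * (of_int (2 * z - int d - int (Suc x)) * ?v)"
  proof -
    have "of_int ?c * (of_nat (Suc x) * ?v) + of_int (2 * (z - int (Suc x)) - int d) * ?v
        = of_int (?c * int (Suc x) + (2 * (z - int (Suc x)) - int d)) * ?v"
      by (simp only: lin_nat lin_mult lin_add)
    also have "\<dots> = of_int (int (Suc (Suc x)) * (2 * z - int d - int (Suc x))) * ?v"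
      by (rule lin_cong) (simp add: algebra_simps)
    finally show ?thesis by (simp only: lin_nat lin_mult)
  qed
  have "of_nat (Suc (Suc x)) * (e * (F (Suc (Suc x)) * w)) =
     of_nat (Suc (Suc x)) * (?A + of_int (2 * z - int d - int (Suc x)) * (F (Suc x) * w))"
    unfolding 1 2 by (simp only: distrib_left)
  then show ?case by (rule cancel_nat[rotated]) simp
qed

lemma lin_diff2: "(X::'a::ring_1) - of_int a * V - of_int b * V = X - of_int (a + b) * V"
  by (simp only: of_int_add distrib_right diff_diff_eq)

lemma comm_fE:
  "eig z w \<Longrightarrow> f * (E (Suc y) * w) = E (Suc y) * (f * w) - of_int (2 * z - int d + int y) * (E y * w)"
proof (induction y)
  case 0
  then show ?case using fe_eig[OF 0] by (simp add: E1)
next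
  case (Suc y)
  let ?v = "E (Suc y) * w"
  let ?A = "E (Suc (Suc y)) * (f * w)"
  let ?c = "2 * z - int d + int y"
  have ev: "eig (z + int (Suc y)) ?v" using eig_E Suc.prems by blast
  have s1: "e * ?v = of_nat (Suc (Suc y)) * (E (Suc (Suc y)) * w)"
    by (simp only: mult.assoc[symmetric] eE)
  have "of_nat (Suc (Suc y)) * (f * (E (Suc (Suc y)) * w)) = f * (e * ?v)"
    by (simp only: s1 sc_nat)
  also have "\<dots> = e * (f * ?v) - of_int (2 * (z + int (Suc y)) - int d) * ?v"
    by (rule fe_eig[OF ev])
  also have "e * (f * ?v) = e * (E (Suc y) * (f * w)) - of_int ?c * (e * (E y * w))"
    by (simp only: Suc.IH[OF Suc.prems] right_diff_distrib sc_int[of e])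
  also have "\<dots> = of_nat (Suc (Suc y)) * ?A - of_int ?c * (of_nat (Suc y) * ?v)"
    by (simp only: mult.assoc[symmetric] eE)
  also have "of_int ?c * (of_nat (Suc y) * ?v) = of_int (?c * int (Suc y)) * ?v"
    by (simp only: lin_nat lin_mult)
  finally have 1: "of_nat (Suc (Suc y)) * (f * (E (Suc (Suc y)) * w)) =
      of_nat (Suc (Suc y)) * ?A - of_int (?c * int (Suc y) + (2 * (z + int (Suc y)) - int d)) * ?v"
    by (simp only: lin_diff2)
  have 2: "of_int (?c * int (Suc y) + (2 * (z + int (Suc y)) - int d)) * ?v
      = of_nat (Suc (Suc y)) * (of_int (2 * z - int d + int (Suc y)) * ?v)"
  proof -
    have "of_int (?c * int (Suc y) + (2 * (z + int (Suc y)) - int d)) * ?v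
        = of_int (int (Suc (Suc y)) * (2 * z - int d + int (Suc y))) * ?v"
      by (rule lin_cong) (simp add: algebra_simps)
    then show ?thesis by (simp only: lin_nat lin_mult)
  qed
  have "of_nat (Suc (Suc y)) * (f * (E (Suc (Suc y)) * w)) =
     of_nat (Suc (Suc y)) * (?A - of_int (2 * z - int d + int (Suc y)) * (E (Suc y) * w))"
    unfolding 1 2 by (simp only: right_diff_distrib)
  then show ?case by (rule cancel_nat[rotated]) simp
qed

end

lemma choose_shift_aux: "(r - 1 choose x) * r = Suc x * (r choose Suc x)"
proof (cases r)
  case 0 then show ?thesis by simp
next
  case (Suc r')
  then show ?thesis using Suc_times_binomial[of x r'] by (simp add: mult.commute)
qed

context sl
begin

lemma int_cancel': "z \<noteq> 0 \<Longrightarrow> of_int z * (X::'a) = 0 \<Longrightarrow> X = 0"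
  by (rule int_cancel[OF ra])

lemma LW_fE:
  assumes "f * u = 0" "eig \<mu> u"
  shows "f * (E (Suc y) * u) = of_int (int d - 2 * \<mu> - int y) * (E y * u)"
proof -
  have "f * (E (Suc y) * u) = E (Suc y) * (f * u) - of_int (2 * \<mu> - int d + int y) * (E y * u)"
    by (rule comm_fE[OF assms(2)])
  also have "\<dots> = - (of_int (2 * \<mu> - int d + int y) * (E y * u))" using assms(1) by simp
  also have "\<dots> = of_int (int d - 2 * \<mu> - int y) * (E y * u)"
  proof -
    have "int d - 2 * \<mu> - int y = - (2 * \<mu> - int d + int y)" by simp
    then show ?thesis by (simp only: of_int_minus minus_mult_left)
  qed
  finally show ?thesis .
qed

lemma LW_Evan:
  assumes "f * u = 0" "eig \<mu> u"
  shows "int y > int d - 2 * \<mu> \<Longrightarrow> E y * u = 0"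
proof (induction "nat (int d - \<mu> + 1 - int y)" arbitrary: y)
  case 0
  then have "\<mu> + int y > int d" by simp
  then show ?case using E_van[OF assms(2)] by blast
next
  case (Suc k)
  have "E (Suc y) * u = 0" using Suc.hyps(1)[of "Suc y"] Suc.hyps(2) Suc.prems by simp
  then have "of_int (int d - 2 * \<mu> - int y) * (E y * u) = 0"
    unfolding LW_fE[OF assms, symmetric] by simp
  moreover have "int d - 2 * \<mu> - int y \<noteq> 0" using Suc.prems by simp
  ultimately show ?case using int_cancel' by blast
qed

lemma LW_FE:
  assumes "f * u = 0" "eig \<mu> u"
  shows "x \<le> y \<Longrightarrow> F x * (E y * u) = of_nat ((nat (int d - 2 * \<mu>) - (y - x)) choose x) * (E (y - x) * u)"
proof (induction x)
  case 0
  then show ?case by simp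
next
  case (Suc x)
  let ?n = "int d - 2 * \<mu>"
  let ?C = "(nat ?n - (y - x)) choose x"
  have yx: "y - x = Suc (y - Suc x)" using Suc.prems by simp
  have "of_nat (Suc x) * (F (Suc x) * (E y * u)) = f * (F x * (E y * u))"
    by (simp only: mult.assoc[symmetric] fF)
  also have "\<dots> = of_nat ?C * (f * (E (y - x) * u))"
    using Suc.IH Suc.prems by (simp add: sc_nat)
  also have "\<dots> = of_nat ?C * (of_int (?n - int (y - Suc x)) * (E (y - Suc x) * u))"
    unfolding yx LW_fE[OF assms] by simp
  also have "\<dots> = of_nat (Suc x) * (of_nat ((nat ?n - (y - Suc x)) choose Suc x) * (E (y - Suc x) * u))"
  proof (cases "int (y - Suc x) > ?n")
    case True
    then have "E (y - Suc x) * u = 0" using LW_Evan[OF assms] by blast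
    then show ?thesis by simp
  next
    case False
    define r where "r = nat ?n - (y - Suc x)"
    have r1: "nat ?n - (y - x) = r - 1" unfolding r_def yx by simp
    have r2: "?n - int (y - Suc x) = int r" unfolding r_def using False by simp
    have "of_nat ?C * (of_int (?n - int (y - Suc x)) * (E (y - Suc x) * u))
        = of_int (int ((r - 1 choose x) * r)) * (E (y - Suc x) * u)"
      unfolding r1 r2 by (simp only: lin_nat lin_mult of_nat_mult)
    also have "\<dots> = of_int (int (Suc x * (r choose Suc x))) * (E (y - Suc x) * u)"
      by (simp only: choose_shift_aux)
    also have "\<dots> = of_nat (Suc x) * (of_nat (r choose Suc x) * (E (y - Suc x) * u))"
      by (simp only: lin_nat lin_mult of_nat_mult)
    finally show ?thesis unfolding r_def .
  qed
  finally show ?case by (rule cancel_nat[rotated]) simp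
qed

lemma LW_FE0:
  assumes "f * u = 0" "eig \<mu> u"
  shows "x > y \<Longrightarrow> F x * (E y * u) = 0"
proof (induction x)
  case 0 then show ?case by simp
next
  case (Suc x)
  have "f * (F x * (E y * u)) = 0"
  proof (cases "x > y")
    case True then show ?thesis using Suc.IH by simp
  next
    case False
    then have "x = y" using Suc.prems by simp
    then have "F x * (E y * u) = of_nat ((nat (int d - 2 * \<mu>) - 0) choose y) * u"
      using LW_FE[OF assms, of y y] by simp
    then show ?thesis using assms(1) by (simp add: sc_nat)
  qed
  then have "of_nat (Suc x) * (F (Suc x) * (E y * u)) = of_nat (Suc x) * 0"
    by (simp only: mult.assoc[symmetric] fF mult_zero_right)
  then show ?case by (rule cancel_nat[rotated]) simp
qed

end

context sl
begin

lemma eig_ni': "C > 0 \<Longrightarrow> eig z w \<Longrightarrow> eig z (nat_inv C * w)"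
  unfolding eig_def
proof -
  assume C: "C > 0" and a: "H1 * w = of_int z * w"
  have "H1 * (nat_inv C * w) = (H1 * nat_inv C) * w" by (rule mult.assoc[symmetric])
  also have "H1 * nat_inv C = nat_inv C * H1" by (rule ni_central[OF ra C, symmetric])
  also have "nat_inv C * H1 * w = nat_inv C * (of_int z * w)" by (simp only: mult.assoc a)
  also have "\<dots> = of_int z * (nat_inv C * w)" by (rule sc_int)
  finally show "H1 * (nat_inv C * w) = of_int z * (nat_inv C * w)" .
qed

lemma ni_comm: "C > 0 \<Longrightarrow> (X::'a) * (nat_inv C * v) = nat_inv C * (X * v)"
proof -
  assume C: "C > 0"
  have "X * (nat_inv C * v) = (X * nat_inv C) * v" by (rule mult.assoc[symmetric])
  also have "X * nat_inv C = nat_inv C * X" by (rule ni_central[OF ra C, symmetric])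
  finally show ?thesis by (simp only: mult.assoc)
qed

lemma gamma:
  assumes w: "eig z w" and fK: "F (Suc K) * w = 0"
  shows "of_nat (fact j) * (F (K + j) * (E j * w))
         = of_int (\<Prod>i<j. int d - 2 * (z - int K) - int K - int i) * (F K * w)"
proof (induction j)
  case 0 then show ?case by simp
next
  case (Suc j)
  let ?u = "F K * w"
  let ?v = "E j * w"
  let ?P = "\<Prod>i<j. int d - 2 * (z - int K) - int K - int i"
  have fu: "f * ?u = 0" using fK by (simp only: mult.assoc[symmetric] fF) (simp only: mult.assoc fK mult_zero_right)
  have ev: "eig (z + int j) ?v" using eig_E[OF w] .
  have fj: "(fact j :: nat) > 0" by simp
  have a: "F (Suc (K + j)) * ?v = 0"
  proof -
    have "of_nat (fact j * Suc (K + j)) * (F (Suc (K + j)) * ?v)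
        = of_nat (fact j) * (of_nat (Suc (K + j)) * (F (Suc (K + j)) * ?v))"
      by (simp only: of_nat_mult mult.assoc)
    also have "of_nat (Suc (K + j)) * (F (Suc (K + j)) * ?v) = f * (F (K + j) * ?v)"
      by (simp only: mult.assoc[symmetric] fF)
    also have "of_nat (fact j) * (f * (F (K + j) * ?v)) = f * (of_nat (fact j) * (F (K + j) * ?v))"
      by (rule sc_nat[symmetric])
    also have "of_nat (fact j) * (F (K + j) * ?v) = of_int ?P * ?u" by (rule Suc.IH)
    also have "f * (of_int ?P * ?u) = 0" by (simp only: sc_int fu mult_zero_right)
    finally have eq: "of_nat (fact j * Suc (K + j)) * (F (Suc (K + j)) * ?v) = 0" .
    have pos: "fact j * Suc (K + j) > 0" by simp
    show ?thesis by (rule nat_cancel[OF ra pos eq])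
  qed
  have b: "F (Suc (K + j)) * (e * ?v) = - (of_int (2 * (z + int j) - int d - int (K + j)) * (F (K + j) * ?v))"
  proof -
    have "0 = e * (F (Suc (K + j)) * ?v)" by (simp only: a mult_zero_right)
    also have "\<dots> = F (Suc (K + j)) * (e * ?v) + of_int (2 * (z + int j) - int d - int (K + j)) * (F (K + j) * ?v)"
      by (rule comm_eF[OF ev])
    finally have "F (Suc (K + j)) * (e * ?v) + of_int (2 * (z + int j) - int d - int (K + j)) * (F (K + j) * ?v) = 0"
      by (rule sym)
    then show ?thesis unfolding eq_neg_iff_add_eq_0 .
  qed
  have "of_nat (fact (Suc j)) * (F (K + Suc j) * (E (Suc j) * w))
      = of_nat (fact j) * (F (Suc (K + j)) * (of_nat (Suc j) * (E (Suc j) * w)))"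
  proof -
    have "of_nat (fact (Suc j)) = (of_nat (fact j) * of_nat (Suc j) :: 'a)"
    proof -
      have "fact (Suc j) = fact j * Suc j" by (simp only: fact_Suc of_nat_id mult.commute)
      then show ?thesis by (simp only: of_nat_mult)
    qed
    moreover have "F (Suc (K + j)) * (of_nat (Suc j) * (E (Suc j) * w))
        = of_nat (Suc j) * (F (Suc (K + j)) * (E (Suc j) * w))" by (rule sc_nat)
    ultimately show ?thesis by (simp only: mult.assoc add_Suc_right)
  qed
  also have "of_nat (Suc j) * (E (Suc j) * w) = e * ?v" by (simp only: mult.assoc[symmetric] eE)
  also note b
  also have "of_nat (fact j) * - (of_int (2 * (z + int j) - int d - int (K + j)) * (F (K + j) * ?v))
      = - (of_int (2 * (z + int j) - int d - int (K + j)) * (of_nat (fact j) * (F (K + j) * ?v)))"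
    by (simp only: mult_minus_right sc_int)
  also have "\<dots> = - (of_int (2 * (z + int j) - int d - int (K + j)) * (of_int ?P * ?u))"
    by (simp only: Suc.IH)
  also have "\<dots> = of_int (?P * (int d - 2 * (z - int K) - int K - int j)) * ?u"
  proof -
    have i: "?P * (int d - 2 * (z - int K) - int K - int j) = (- (2 * (z + int j) - int d - int (K + j))) * ?P"
      by (simp add: algebra_simps)
    have "- (of_int (2 * (z + int j) - int d - int (K + j)) * (of_int ?P * ?u))
        = of_int (- (2 * (z + int j) - int d - int (K + j))) * (of_int ?P * ?u)"
      by (simp only: of_int_minus mult_minus_left)
    also have "\<dots> = of_int (?P * (int d - 2 * (z - int K) - int K - int j)) * ?u"
      by (simp only: lin_mult i)
    finally show ?thesis .
  qed
  also have "?P * (int d - 2 * (z - int K) - int K - int j) = (\<Prod>i<Suc j. int d - 2 * (z - int K) - int K - int i)"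
    by simp
  finally show ?case .
qed

lemma lw_red:
  assumes hyp: "\<And>k u. f * u = 0 \<Longrightarrow> eig (z - int k) u \<Longrightarrow> X * (E k * u) = 0"
  and w: "eig z w"
  shows "X * w = 0"
proof (cases "z < 0 \<or> z > int d")
  case True
  then have "w = 0" using eig_van[OF w] by blast
  then show ?thesis by simp
next
  case False
  then have z: "0 \<le> z" "z \<le> int d" by auto
  have main: "\<forall>w. eig z w \<longrightarrow> F K * w = 0 \<longrightarrow> X * w = 0" for K
  proof (induction K)
    case 0 then show ?case by simp
  next
    case (Suc K)
    show ?case
    proof (intro allI impI)
      fix w assume w: "eig z w" and fK: "F (Suc K) * w = 0"
      let ?u = "F K * w"
      let ?n = "int d - 2 * (z - int K)"
      have fu: "f * ?u = 0" using fK by (simp only: mult.assoc[symmetric] fF) (simp only: mult.assoc fK mult_zero_right)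
      have eu: "eig (z - int K) ?u" using eig_F[OF w] .
      show "X * w = 0"
      proof (cases "int K \<le> ?n")
        case True
        let ?C = "nat ?n choose K"
        have C: "?C > 0" using True by simp
        have FE: "F K * (E K * ?u) = of_nat ?C * ?u"
          using LW_FE[OF fu eu le_refl] by (simp only: diff_self_eq_0 diff_zero dpow_0 mult_1_left)
        define w' where "w' = w - nat_inv ?C * (E K * ?u)"
        have eKu: "eig z (E K * ?u)" using eig_E[OF eu, of K] by simp
        have ew': "eig z w'" unfolding w'_def
          by (rule eig_diff[OF w eig_ni'[OF C eKu]])
        have "F K * w' = F K * w - F K * (nat_inv ?C * (E K * ?u))"
          unfolding w'_def by (rule right_diff_distrib)
        also have "F K * (nat_inv ?C * (E K * ?u)) = ?u"
        proof -
          have "F K * (nat_inv ?C * (E K * ?u)) = nat_inv ?C * (F K * (E K * ?u))"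
            by (rule ni_comm[OF C])
          also have "\<dots> = nat_inv ?C * (of_nat ?C * ?u)" by (simp only: FE)
          also have "\<dots> = ?u" by (simp only: mult.assoc[symmetric] ni(2)[OF ra C] mult_1_left)
          finally show ?thesis .
        qed
        finally have "F K * w' = 0" by (simp only: diff_self)
        then have "X * w' = 0" using Suc.IH ew' by blast
        moreover have "X * (E K * ?u) = 0" using hyp[OF fu eu] .
        moreover have "X * w = X * w' + nat_inv ?C * (X * (E K * ?u))"
        proof -
          have "X * w = X * (w' + nat_inv ?C * (E K * ?u))" unfolding w'_def by simp
          then show ?thesis by (simp only: distrib_left ni_comm[OF C])
        qed
        ultimately show ?thesis by simp
      next
        case False
        define J where "J = nat (int d - z) + 1"
        have zJ: "z + int J > int d" unfolding J_def using z by simp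
        have EJ: "E J * w = 0" by (rule E_van[OF w zJ])
        have "of_int (\<Prod>i<J. ?n - int K - int i) * ?u = of_nat (fact J) * (F (K + J) * (E J * w))"
          by (rule gamma[OF w fK, symmetric])
        also have "\<dots> = 0" by (simp only: EJ mult_zero_right)
        finally have "of_int (\<Prod>i<J. ?n - int K - int i) * ?u = 0" .
        moreover have "(\<Prod>i<J. ?n - int K - int i) \<noteq> 0"
        proof -
          have "\<forall>i\<in>{..<J}. ?n - int K - int i \<noteq> 0" using False by auto
          then show ?thesis by (simp only: prod_zero_iff finite_lessThan bex_simps not_ex)
        qed
        ultimately have "?u = 0" using int_cancel' by blast
        then show ?thesis using Suc.IH w by blast
      qed
    qed
  qed
  have "F (nat z + 1) * w = 0" using F_van[OF w] z by simp
  then show ?thesis using main w by blast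
qed

end

lemma binom_aux: "Suc j * ((N + Suc j) choose Suc j) = Suc N * ((N + Suc j) choose j)"
proof -
  have 1: "Suc (N + j) * ((N + j) choose j) = (Suc (N + j) choose Suc j) * Suc j"
    by (rule Suc_times_binomial_eq)
  have 2: "(Suc (N + j) - j) * (Suc (N + j) choose j) = Suc (N + j) * ((Suc (N + j) - 1) choose j)"
    by (rule binomial_absorb_comp)
  have 3: "Suc (N + j) - j = Suc N" by simp
  show ?thesis using 1 2 unfolding 3 by (simp add: mult.commute)
qed

definition cR :: "nat \<Rightarrow> nat \<Rightarrow> int" where
  "cR N j = (-1) ^ j * int ((N + j) choose j)"

lemma cR_rel: "- (int (Suc j) * cR N (Suc j)) = int (Suc N) * cR (Suc N) j"
proof -
  have "- (int (Suc j) * cR N (Suc j)) = (-1) ^ j * int (Suc j * ((N + Suc j) choose Suc j))"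
    unfolding cR_def by (simp del: binomial_Suc_Suc add: algebra_simps)
  also have "\<dots> = (-1) ^ j * int (Suc N * ((N + Suc j) choose j))" by (simp only: binom_aux)
  also have "\<dots> = int (Suc N) * cR (Suc N) j" unfolding cR_def by (simp del: binomial_Suc_Suc add: algebra_simps)
  finally show ?thesis .
qed

context sl
begin

definition Ez :: "nat \<Rightarrow> nat \<Rightarrow> 'a" where
  "Ez y j = (if j \<le> y then E (y - j) else 0)"

definition RA :: "nat \<Rightarrow> nat \<Rightarrow> nat \<Rightarrow> 'a \<Rightarrow> 'a" where
  "RA x y N v = (\<Sum>j\<le>x. of_int (cR N j) * (F (x - j) * (Ez y j * v)))"

definition Rop :: "nat \<Rightarrow> nat \<Rightarrow> nat \<Rightarrow> 'a" where
  "Rop x y N = (\<Sum>j\<le>x. of_int (cR N j) * (F (x - j) * Ez y j))"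

lemma Rop_RA: "Rop x y N * v = RA x y N v"
  unfolding Rop_def RA_def by (simp only: sum_distrib_right mult.assoc)

lemma Ez_e: "Ez y j * e = of_int (int y + 1 - int j) * Ez (Suc y) j"
proof (cases "j \<le> y")
  case True
  then have s: "Suc y - j = Suc (y - j)" by simp
  have 1: "Ez y j * e = E (y - j) * e" unfolding Ez_def using True by simp
  have 2: "E (y - j) * e = of_nat (Suc (y - j)) * E (Suc (y - j))" by (simp only: Ee eE)
  have 3: "int y + 1 - int j = int (Suc (y - j))" using True by simp
  have 4: "Ez (Suc y) j = E (Suc (y - j))" unfolding Ez_def using True s by simp
  show ?thesis unfolding 1 2 3 4 by (rule lin_nat)
next
  case False
  show ?thesis
  proof (cases "j = Suc y")
    case True
    then have "Ez y j = 0" "int y + 1 - int j = 0" unfolding Ez_def by simp_all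
    then show ?thesis by simp
  next
    case False
    then have "Ez y j = 0" "Ez (Suc y) j = 0" unfolding Ez_def using \<open>\<not> j \<le> y\<close> by simp_all
    then show ?thesis by simp
  qed
qed

lemma Ez_Suc: "Ez (Suc y) (Suc j) = Ez y j"
  unfolding Ez_def by simp

lemma R_shift:
  "RA (Suc x) y N (e * v) = of_nat (Suc y) * RA (Suc x) (Suc y) N v + of_nat (Suc N) * RA x y (Suc N) v"
proof -
  define T where "T j = F (Suc x - j) * (Ez (Suc y) j * v)" for j
  define g where "g j = of_int (cR N j * (int y + 1 - int j)) * T j" for j
  define h where "h j = of_int ((int y + 1) * cR N j) * T j" for j
  define l where "l j = of_int (int (Suc N) * cR (Suc N) j) * T (Suc j)" for j
  have L1: "RA (Suc x) y N (e * v) = (\<Sum>j\<le>Suc x. g j)"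
    unfolding RA_def
  proof (rule sum.cong[OF refl])
    fix j
    have "Ez y j * (e * v) = of_int (int y + 1 - int j) * (Ez (Suc y) j * v)"
      by (simp only: mult.assoc[symmetric] Ez_e)
    then have "of_int (cR N j) * (F (Suc x - j) * (Ez y j * (e * v)))
        = of_int (cR N j) * (F (Suc x - j) * (of_int (int y + 1 - int j) * (Ez (Suc y) j * v)))"
      by (simp only:)
    also have "\<dots> = of_int (cR N j) * (of_int (int y + 1 - int j) * (F (Suc x - j) * (Ez (Suc y) j * v)))"
      by (simp only: sc_int[of "F (Suc x - j)"])
    also have "\<dots> = g j" unfolding g_def T_def by (simp only: lin_mult)
    finally show "of_int (cR N j) * (F (Suc x - j) * (Ez y j * (e * v))) = g j" .
  qed
  have L2: "of_nat (Suc y) * RA (Suc x) (Suc y) N v = (\<Sum>j\<le>Suc x. h j)"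
    unfolding RA_def sum_distrib_left h_def T_def
    by (rule sum.cong[OF refl]) (simp only: lin_nat lin_mult, rule lin_cong, simp)
  have L3: "of_nat (Suc N) * RA x y (Suc N) v = (\<Sum>j\<le>x. l j)"
    unfolding RA_def sum_distrib_left l_def T_def
    by (rule sum.cong[OF refl]) (simp only: lin_nat lin_mult Ez_Suc diff_Suc_Suc)
  have g0: "g 0 = h 0" unfolding g_def h_def by (simp add: mult.commute)
  have gS: "g (Suc j) = h (Suc j) + l j" for j
  proof -
    have "cR N (Suc j) * (int y + 1 - int (Suc j)) = (int y + 1) * cR N (Suc j) + (- (int (Suc j) * cR N (Suc j)))"
      by (simp add: algebra_simps)
    also have "\<dots> = (int y + 1) * cR N (Suc j) + int (Suc N) * cR (Suc N) j" by (simp only: cR_rel)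
    finally show ?thesis unfolding g_def h_def l_def by (simp only: lin_add)
  qed
  have "(\<Sum>j\<le>Suc x. g j) = g 0 + (\<Sum>j\<le>x. g (Suc j))" by (rule sum.atMost_Suc_shift)
  also have "\<dots> = h 0 + ((\<Sum>j\<le>x. h (Suc j)) + (\<Sum>j\<le>x. l j))"
    by (simp only: g0 gS sum.distrib)
  also have "\<dots> = (\<Sum>j\<le>Suc x. h j) + (\<Sum>j\<le>x. l j)"
    by (simp only: sum.atMost_Suc_shift add.assoc)
  finally show ?thesis unfolding L1 L2 L3 .
qed

end

lemma vand_neg:
  assumes "N + 1 \<le> A" "A < N + 1 + x"
  shows "(\<Sum>j\<le>x. cR N j * int (A choose (x - j))) = 0"
proof -
  have t: "(of_int (cR N j * int (A choose (x - j))) :: rat)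
      = ((- of_nat (N + 1)) gchoose j) * (of_nat A gchoose (x - j))" for j
  proof -
    have "((- of_nat (N + 1)) gchoose j :: rat) = (-1) ^ j * ((of_nat (N + 1) + of_nat j - 1) gchoose j)"
      by (rule gbinomial_minus)
    also have "(of_nat (N + 1) + of_nat j - 1 :: rat) = of_nat (N + j)" by simp
    also have "(of_nat (N + j) gchoose j :: rat) = of_nat ((N + j) choose j)" by (rule binomial_gbinomial[symmetric])
    finally have "((- of_nat (N + 1)) gchoose j :: rat) = of_int (cR N j)" unfolding cR_def by simp
    moreover have "(of_nat A gchoose (x - j) :: rat) = of_nat (A choose (x - j))" by (rule binomial_gbinomial[symmetric])
    ultimately show ?thesis by simp
  qed
  have "(of_int (\<Sum>j\<le>x. cR N j * int (A choose (x - j))) :: rat)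
      = (\<Sum>j\<in>{0..x}. ((- of_nat (N + 1)) gchoose j) * (of_nat A gchoose (x - j)))"
    unfolding of_int_sum t atMost_atLeast0 ..
  also have "\<dots> = (- of_nat (N + 1) + of_nat A) gchoose x" by (rule gbinomial_Vandermonde)
  also have "(- of_nat (N + 1) + of_nat A :: rat) = of_nat (A - N - 1)" using assms(1) by (simp add: of_nat_diff)
  also have "(of_nat (A - N - 1) gchoose x :: rat) = of_nat ((A - N - 1) choose x)" by (rule binomial_gbinomial[symmetric])
  also have "(A - N - 1) choose x = 0" using assms by simp
  finally have h: "(of_int (\<Sum>j\<le>x. cR N j * int (A choose (x - j))) :: rat) = of_nat 0" .
  show ?thesis using h by (simp only: of_nat_0 of_int_eq_0_iff)
qed

context sl
begin

lemma RA_zero_v: "RA x y N 0 = 0"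
  unfolding RA_def by simp

lemma RA_scal: "RA x y N (of_nat c * v) = of_nat c * RA x y N v"
  unfolding RA_def sum_distrib_left
proof (rule sum.cong[OF refl])
  fix j
  have "F (x - j) * (Ez y j * (of_nat c * v)) = of_nat c * (F (x - j) * (Ez y j * v))"
    by (simp only: sc_nat[of "Ez y j"] sc_nat[of "F (x - j)"])
  then show "of_int (cR N j) * (F (x - j) * (Ez y j * (of_nat c * v))) = of_nat c * (of_int (cR N j) * (F (x - j) * (Ez y j * v)))"
    by (simp only: sc_nat[of "of_int (cR N j)"])
qed

lemma R_lw0:
  assumes fu: "f * u = 0" and eu: "eig \<mu> u"
  and N: "int N = int d - \<mu> - int y" and x: "int x > \<mu>"
  shows "RA x y N u = 0"
proof (cases "\<mu> < 0")
  case True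
  then have "u = 0" using eig_van[OF eu] by blast
  then show ?thesis by (simp only: RA_zero_v)
next
  case False
  let ?n = "int d - 2 * \<mu>"
  show ?thesis
  proof (cases "x \<le> y")
    case True
    let ?A = "nat ?n - (y - x)"
    let ?V = "E (y - x) * u"
    have tm: "of_int (cR N j) * (F (x - j) * (Ez y j * u)) = of_int (cR N j * int (?A choose (x - j))) * ?V"
      if j: "j \<in> {..x}" for j
    proof -
      have jy: "j \<le> y" "x - j \<le> y - j" "y - j - (x - j) = y - x" using j True by auto
      have "Ez y j = E (y - j)" unfolding Ez_def using jy by simp
      then have "F (x - j) * (Ez y j * u) = of_nat (?A choose (x - j)) * ?V"
        using LW_FE[OF fu eu jy(2)] unfolding jy(3) by simp
      then show ?thesis by (simp only: lin_nat lin_mult)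
    qed
    have "RA x y N u = (\<Sum>j\<le>x. of_int (cR N j * int (?A choose (x - j))) * ?V)"
      unfolding RA_def by (rule sum.cong[OF refl tm])
    also have "\<dots> = of_int (\<Sum>j\<le>x. cR N j * int (?A choose (x - j))) * ?V"
      by (simp only: of_int_sum sum_distrib_right)
    also have "\<dots> = 0"
    proof (cases "int (y - x) > ?n")
      case True
      then have "?V = 0" using LW_Evan[OF fu eu] by blast
      then show ?thesis by simp
    next
      case False
      have "int ?A = int N - \<mu> + int x" using False True N by simp
      then have "N + 1 \<le> ?A" "?A < N + 1 + x" using x \<open>\<not> \<mu> < 0\<close> by linarith+
      then show ?thesis using vand_neg by simp
    qed
    finally show ?thesis .
  next
    case False
    have "of_int (cR N j) * (F (x - j) * (Ez y j * u)) = 0" for j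
    proof (cases "j \<le> y")
      case True
      then have "Ez y j = E (y - j)" unfolding Ez_def by simp
      moreover have "x - j > y - j" using True False by simp
      ultimately show ?thesis using LW_FE0[OF fu eu] by simp
    next
      case False
      then show ?thesis unfolding Ez_def by simp
    qed
    then show ?thesis unfolding RA_def by simp
  qed
qed

lemma R_e:
  assumes fu: "f * u = 0" and eu: "eig \<mu> u"
  shows "\<forall>x y N. int N = int d - (\<mu> + int p) - int y \<longrightarrow> int x > \<mu> + int p \<longrightarrow> RA x y N (E p * u) = 0"
proof (cases "\<mu> < 0")
  case True
  then have "u = 0" using eig_van[OF eu] by blast
  then show ?thesis by (simp only: mult_zero_right RA_zero_v) simp
next
  case False
  show ?thesis
  proof (induction p)
    case 0
    show ?case using R_lw0[OF fu eu] by simp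
  next
    case (Suc p)
    show ?case
    proof (intro allI impI)
      fix x y N
      assume N: "int N = int d - (\<mu> + int (Suc p)) - int y" and x: "int x > \<mu> + int (Suc p)"
      obtain x' where x': "x = Suc x'" using x False by (cases x) auto
      let ?v = "E p * u"
      have "of_nat (Suc p) * RA x y N (E (Suc p) * u) = RA x y N (of_nat (Suc p) * (E (Suc p) * u))"
        by (rule RA_scal[symmetric])
      also have "of_nat (Suc p) * (E (Suc p) * u) = e * ?v" by (simp only: mult.assoc[symmetric] eE)
      also have "RA x y N (e * ?v) = of_nat (Suc y) * RA (Suc x') (Suc y) N ?v + of_nat (Suc N) * RA x' y (Suc N) ?v"
        unfolding x' by (rule R_shift)
      also have "RA (Suc x') (Suc y) N ?v = 0"
        using Suc.IH N x x' by simp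
      also have "RA x' y (Suc N) ?v = 0"
        using Suc.IH N x x' by simp
      finally have "of_nat (Suc p) * RA x y N (E (Suc p) * u) = 0" by simp
      then show "RA x y N (E (Suc p) * u) = 0" using nat_cancel[OF ra] by blast
    qed
  qed
qed

lemma R_zero:
  assumes w: "eig m w" and N: "int N = int d - m - int y" and x: "int x > m"
  shows "RA x y N w = 0"
proof -
  have "Rop x y N * w = 0"
  proof (rule lw_red[OF _ w])
    fix k u assume fu: "f * u = 0" and eu: "eig (m - int k) u"
    have "RA x y N (E k * u) = 0"
      using R_e[OF fu eu, of k] N x by simp
    then show "Rop x y N * (E k * u) = 0" by (simp only: Rop_RA)
  qed
  then show ?thesis by (simp only: Rop_RA)
qed

end

lemma cross_binom:
  assumes "s \<le> k"
  shows "((N + s) choose s) * ((N + k) choose (k - s)) = (k choose s) * ((N + k) choose k)"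
proof -
  have a: "((N + k) choose k) * (k choose s) = ((N + k) choose s) * ((N + k - s) choose (k - s))"
    by (rule choose_mult) (use assms in auto)
  have b: "((N + k) choose (N + s)) * ((N + s) choose s) = ((N + k) choose s) * ((N + k - s) choose (N + s - s))"
    by (rule choose_mult) (use assms in auto)
  have c: "(N + k) choose (N + s) = (N + k) choose (k - s)"
    using binomial_symmetric[of "N + s" "N + k"] assms by simp
  have d: "(N + k - s) choose (k - s) = (N + k - s) choose N"
    using binomial_symmetric[of "k - s" "N + k - s"] assms by simp
  show ?thesis using a b c d by (simp add: mult.commute)
qed

definition Wt :: "nat \<Rightarrow> nat \<Rightarrow> (nat \<Rightarrow> 'a::ring_1) \<Rightarrow> nat \<Rightarrow> 'a" where
  "Wt N M w i = (\<Sum>k\<in>{i..M}. of_int ((-1) ^ (k - i) * int ((N + k) choose (k - i))) * w k)"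

definition cf :: "nat \<Rightarrow> nat \<Rightarrow> nat \<Rightarrow> int" where
  "cf N s k = (-1) ^ (k - s) * int ((k - 1) choose (s - 1)) * int ((N + k) choose k)"

lemma solve_step_coef:
  assumes "1 \<le> s" "s \<le> k"
  shows "- cf N s k + int ((N + s) choose s) * ((-1) ^ (k - s) * int ((N + k) choose (k - s))) = - cf N (Suc s) k"
proof (cases "k = s")
  case True
  then show ?thesis unfolding cf_def using assms by simp
next
  case False
  then have ks: "k - s = Suc (k - Suc s)" using assms by simp
  have pas: "k choose s = (k - 1 choose (s - 1)) + (k - 1 choose s)"
    using assms binomial_Suc_Suc[of "k - 1" "s - 1"] by simp
  have "int ((N + s) choose s) * ((-1) ^ (k - s) * int ((N + k) choose (k - s)))
      = (-1) ^ (k - s) * int ((k choose s) * ((N + k) choose k))"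
  proof -
    have h: "int ((N + s) choose s) * int ((N + k) choose (k - s)) = int ((k choose s) * ((N + k) choose k))"
      using cross_binom[OF assms(2), of N] by (simp only: of_nat_mult[symmetric])
    have "int ((N + s) choose s) * ((-1) ^ (k - s) * int ((N + k) choose (k - s)))
        = (-1) ^ (k - s) * (int ((N + s) choose s) * int ((N + k) choose (k - s)))"
      by (rule mult.left_commute)
    then show ?thesis by (simp only: h)
  qed
  then show ?thesis unfolding cf_def ks pas by (simp add: algebra_simps)
qed

lemma solve:
  fixes w :: "nat \<Rightarrow> 'a::ring_1"
  shows "(\<Sum>i<Suc t. of_nat ((N + i) choose i) * Wt N M w i)
         = w 0 - (\<Sum>k\<in>{Suc t..M}. of_int (cf N (Suc t) k) * w k)"
proof (induction t)
  case 0
  have "(\<Sum>i<Suc 0. of_nat ((N + i) choose i) * Wt N M w i) = Wt N M w 0" by simp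
  also have "\<dots> = w 0 + (\<Sum>k\<in>{Suc 0..M}. of_int ((-1) ^ k * int ((N + k) choose k)) * w k)"
    unfolding Wt_def by (simp add: sum.atLeast_Suc_atMost)
  also have "(\<Sum>k\<in>{Suc 0..M}. of_int ((-1) ^ k * int ((N + k) choose k)) * w k)
      = - (\<Sum>k\<in>{Suc 0..M}. of_int (cf N (Suc 0) k) * w k)"
    unfolding sum_negf[symmetric]
  proof (rule sum.cong[OF refl])
    fix k assume "k \<in> {Suc 0..M}"
    then obtain k' where k: "k = Suc k'" by (cases k) auto
    show "of_int ((-1) ^ k * int ((N + k) choose k)) * w k = - (of_int (cf N (Suc 0) k) * w k)"
    proof -
      have "(-1) ^ k * int ((N + k) choose k) = - cf N (Suc 0) k" unfolding cf_def k by (simp del: binomial_Suc_Suc)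
      then show ?thesis by (simp only: of_int_minus mult_minus_left)
    qed
  qed
  finally show ?case by simp
next
  case (Suc t)
  let ?s = "Suc t"
  have "(\<Sum>i<Suc ?s. of_nat ((N + i) choose i) * Wt N M w i)
      = (\<Sum>i<?s. of_nat ((N + i) choose i) * Wt N M w i) + of_nat ((N + ?s) choose ?s) * Wt N M w ?s"
    by simp
  also have "\<dots> = w 0 - (\<Sum>k\<in>{?s..M}. of_int (cf N ?s k) * w k) + of_nat ((N + ?s) choose ?s) * Wt N M w ?s"
    by (simp only: Suc.IH)
  also have "\<dots> = w 0 + (\<Sum>k\<in>{?s..M}. of_int (- cf N ?s k + int ((N + ?s) choose ?s) * ((-1) ^ (k - ?s) * int ((N + k) choose (k - ?s)))) * w k)"
  proof -
    have A: "of_nat ((N + ?s) choose ?s) * Wt N M w ?s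
        = (\<Sum>k\<in>{?s..M}. of_int (int ((N + ?s) choose ?s) * ((-1) ^ (k - ?s) * int ((N + k) choose (k - ?s)))) * w k)"
      unfolding Wt_def sum_distrib_left by (rule sum.cong[OF refl]) (simp only: lin_nat lin_mult)
    have B: "- (\<Sum>k\<in>{?s..M}. of_int (cf N ?s k) * w k) = (\<Sum>k\<in>{?s..M}. of_int (- cf N ?s k) * w k)"
      by (simp only: sum_negf[symmetric] of_int_minus mult_minus_left)
    show ?thesis
      by (simp only: A B diff_conv_add_uminus add.assoc sum.distrib[symmetric] lin_add)
  qed
  also have "(\<Sum>k\<in>{?s..M}. of_int (- cf N ?s k + int ((N + ?s) choose ?s) * ((-1) ^ (k - ?s) * int ((N + k) choose (k - ?s)))) * w k)
      = (\<Sum>k\<in>{?s..M}. of_int (- cf N (Suc ?s) k) * w k)"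
    by (rule sum.cong[OF refl], rule lin_cong, rule solve_step_coef) auto
  also have "\<dots> = - (\<Sum>k\<in>{Suc ?s..M}. of_int (cf N (Suc ?s) k) * w k)"
  proof (cases "?s \<le> M")
    case True
    have "(\<Sum>k\<in>{?s..M}. of_int (- cf N (Suc ?s) k) * w k)
        = of_int (- cf N (Suc ?s) ?s) * w ?s + (\<Sum>k\<in>{Suc ?s..M}. of_int (- cf N (Suc ?s) k) * w k)"
      using True by (simp only: sum.atLeast_Suc_atMost)
    also have "cf N (Suc ?s) ?s = 0" unfolding cf_def by simp
    also have "(\<Sum>k\<in>{Suc ?s..M}. of_int (- cf N (Suc ?s) k) * w k) = - (\<Sum>k\<in>{Suc ?s..M}. of_int (cf N (Suc ?s) k) * w k)"
      by (simp only: sum_negf[symmetric] of_int_minus mult_minus_left)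
    finally show ?thesis by (simp only: minus_zero of_int_0 mult_zero_left add_0_left)
  next
    case False
    then show ?thesis by simp
  qed
  finally show ?case by (simp only: diff_conv_add_uminus)
qed

lemma prod_fact_choose: "(\<Prod>i<b. int N - int i) = int (fact b * (N choose b))"
proof (induction b)
  case 0 then show ?case by simp
next
  case (Suc b)
  have abs: "Suc b * (N choose Suc b) = (N - b) * (N choose b)"
    using binomial_absorption[of b N] binomial_absorb_comp[of N b] by simp
  have "(\<Prod>i<Suc b. int N - int i) = int (fact b * (N choose b)) * (int N - int b)"
    using Suc.IH by simp
  also have "\<dots> = int (fact b * ((N - b) * (N choose b)))"
  proof (cases "b \<le> N")
    case True then show ?thesis by (simp add: of_nat_diff)
  next
    case False then show ?thesis by simp
  qed
  also have "\<dots> = int (fact (Suc b) * (N choose Suc b))"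
  proof -
    have "fact (Suc b) * (N choose Suc b) = fact b * (Suc b * (N choose Suc b))"
      by (simp only: fact_Suc of_nat_id ac_simps)
    then show ?thesis unfolding abs by simp
  qed
  finally show ?case .
qed

context sl
begin

lemma bin_eig:
  assumes v: "eig z v" and N: "int d - z = int N"
  shows "binomT H2 b * v = of_nat (N choose b) * v"
proof -
  have h2: "H2 * v = of_int (int N) * v" using eig_H2[OF v] N by simp
  have "binomT H2 b * v = nat_inv (fact b) * (prod_list (map (\<lambda>i. H2 - of_nat i) [0..<b]) * v)"
    unfolding binomT_def by (simp only: mult.assoc)
  also have "\<dots> = nat_inv (fact b) * (of_int (\<Prod>i<b. int N - int i) * v)"
    by (simp only: prod_eig[OF h2])
  also have "\<dots> = nat_inv (fact b) * (of_nat (fact b) * (of_nat (N choose b) * v))"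
    by (simp only: prod_fact_choose of_nat_mult of_int_mult of_int_of_nat_eq mult.assoc)
  also have "\<dots> = of_nat (N choose b) * v"
    by (simp only: mult.assoc[symmetric] ni(2)[OF ra fact_gt_zero] mult_1_left)
  finally show ?thesis .
qed

lemma RA_Wt:
  assumes "i \<le> a" "i \<le> c"
  shows "RA (a - i) (c - i) (N + i) w = Wt N (min a c) (\<lambda>k. F (a - k) * (E (c - k) * w)) i"
proof -
  define g where "g k = of_int ((-1) ^ (k - i) * int ((N + k) choose (k - i))) *
      (if k \<le> c then F (a - k) * (E (c - k) * w) else 0)" for k
  have "RA (a - i) (c - i) (N + i) w = (\<Sum>j\<in>{0..a - i}. g (j + i))"
    unfolding RA_def atMost_atLeast0
  proof (rule sum.cong[OF refl])
    fix j assume "j \<in> {0..a - i}"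
    then have j: "j + i \<le> a" using assms by auto
    have 1: "cR (N + i) j = (-1) ^ (j + i - i) * int ((N + (j + i)) choose (j + i - i))"
      unfolding cR_def by (simp add: add.commute add.left_commute)
    have 2: "F (a - i - j) * (Ez (c - i) j * w) = (if j + i \<le> c then F (a - (j + i)) * (E (c - (j + i)) * w) else 0)"
      unfolding Ez_def using assms by (auto simp: diff_diff_add add.commute)
    show "of_int (cR (N + i) j) * (F (a - i - j) * (Ez (c - i) j * w)) = g (j + i)"
      unfolding g_def 1 2 ..
  qed
  also have "\<dots> = (\<Sum>k\<in>{0 + i..a - i + i}. g k)" by (rule sum.shift_bounds_cl_nat_ivl[symmetric])
  also have "{0 + i..a - i + i} = {i..a}" using assms by simp
  also have "(\<Sum>k\<in>{i..a}. g k) = (\<Sum>k\<in>{i..min a c}. g k)"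
    by (rule sum.mono_neutral_right) (auto simp: g_def)
  also have "\<dots> = Wt N (min a c) (\<lambda>k. F (a - k) * (E (c - k) * w)) i"
    unfolding Wt_def g_def by (rule sum.cong[OF refl]) simp
  finally show ?thesis .
qed

end

context sl
begin

theorem main1:
  assumes dl: "d < a + b + c"
  shows "dpow f a * binomT H2 b * dpow e c =
           (\<Sum>k\<in>{a + b + c - d..min a c}.
              of_int ((-1) ^ (k - (a + b + c - d)) * int ((k - 1) choose (a + b + c - d - 1))
                       * int ((b + k) choose k))
              * (dpow f (a - k) * binomT H2 (b + k) * dpow e (c - k)))"
    (is "?L = ?R")
proof -
  define s where "s = a + b + c - d"
  have s1: "1 \<le> s" using dl unfolding s_def by simp
  define coef where "coef k = (-1) ^ (k - s) * int ((k - 1) choose (s - 1)) * int ((b + k) choose k)" for k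
  have key: "?L * w = ?R * w" if wz: "H1 * w = of_int m * w" for m w
  proof -
    have ew: "eig m w" using wz unfolding eig_def .
    have Rw: "?R * w = (\<Sum>k\<in>{s..min a c}. of_int (coef k) * (F (a - k) * (binomT H2 (b + k) * (E (c - k) * w))))"
      unfolding s_def coef_def sum_distrib_right by (simp only: mult.assoc)
    have Lw: "?L * w = F a * (binomT H2 b * (E c * w))" by (simp only: mult.assoc)
    show ?thesis
    proof (cases "m < 0 \<or> m > int d")
      case True
      then have "w = 0" using eig_van[OF ew] by blast
      then show ?thesis by simp
    next
      case False
      then have m0: "0 \<le> m" "m \<le> int d" by auto
      show ?thesis
      proof (cases "int d < m + int c")
        case True
        have "E c * w = 0" by (rule E_van[OF ew True])
        then have L0: "?L * w = 0" unfolding Lw by simp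
        have "?R * w = 0" unfolding Rw
        proof (rule sum.neutral, rule ballI)
          fix k assume k: "k \<in> {s..min a c}"
          show "of_int (coef k) * (F (a - k) * (binomT H2 (b + k) * (E (c - k) * w))) = 0"
          proof (cases "int d < m + int (c - k)")
            case True
            then have "E (c - k) * w = 0" using E_van[OF ew] by blast
            then show ?thesis by simp
          next
            case False
            define N' where "N' = nat (int d - (m + int (c - k)))"
            have N'e: "int d - (m + int (c - k)) = int N'" using False unfolding N'_def by simp
            have "binomT H2 (b + k) * (E (c - k) * w) = of_nat (N' choose (b + k)) * (E (c - k) * w)"
              by (rule bin_eig[OF eig_E[OF ew] N'e])
            moreover have "N' < b + k"
            proof -
              have "k \<le> c" using k by simp
              then have "int N' = int d - m - int c + int k" using N'e by simp
              then show ?thesis using True by linarith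
            qed
            then have "N' choose (b + k) = 0" by simp
            ultimately show ?thesis by simp
          qed
        qed
        then show ?thesis using L0 by simp
      next
        case False
        define N where "N = nat (int d - m - int c)"
        have Nd: "int N = int d - m - int c" using False unfolding N_def by simp
        define wk where "wk = (\<lambda>k. F (a - k) * (E (c - k) * w))"
        have Lw2: "?L * w = of_nat (N choose b) * wk 0"
        proof -
          have "binomT H2 b * (E c * w) = of_nat (N choose b) * (E c * w)"
            by (rule bin_eig[OF eig_E[OF ew]]) (use Nd in simp)
          then show ?thesis unfolding Lw wk_def by (simp add: sc_nat)
        qed
        have Rw2: "?R * w = (\<Sum>k\<in>{s..min a c}. of_int (coef k * int ((N + k) choose (b + k))) * wk k)"
          unfolding Rw
        proof (rule sum.cong[OF refl])
          fix k assume k: "k \<in> {s..min a c}"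
          then have kc: "k \<le> c" by simp
          have "binomT H2 (b + k) * (E (c - k) * w) = of_nat ((N + k) choose (b + k)) * (E (c - k) * w)"
            by (rule bin_eig[OF eig_E[OF ew]]) (use Nd kc in simp)
          then have "F (a - k) * (binomT H2 (b + k) * (E (c - k) * w)) = of_nat ((N + k) choose (b + k)) * wk k"
            unfolding wk_def by (simp only: sc_nat)
          then show "of_int (coef k) * (F (a - k) * (binomT H2 (b + k) * (E (c - k) * w)))
              = of_int (coef k * int ((N + k) choose (b + k))) * wk k"
            by (simp only: lin_nat lin_mult)
        qed
        show ?thesis
        proof (cases "N < b")
          case True
          have z1: "N choose b = 0" using True by (rule binomial_eq_0)
          have z2: "(N + k) choose (b + k) = 0" for k using True by (intro binomial_eq_0) simp
          have "?L * w = 0" unfolding Lw2 z1 by simp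
          moreover have "?R * w = 0" unfolding Rw2 z2 by simp
          ultimately show ?thesis by simp
        next
          case False
          have rel: "Wt N (min a c) wk i = 0" if i: "i < s" for i
          proof (cases "i \<le> min a c")
            case True
            have "Wt N (min a c) wk i = RA (a - i) (c - i) (N + i) w"
              unfolding wk_def using True by (simp add: RA_Wt)
            also have "\<dots> = 0"
            proof (rule R_zero[OF ew])
              show "int (N + i) = int d - m - int (c - i)" using Nd True by simp
              show "m < int (a - i)" using Nd True i False dl unfolding s_def by simp
            qed
            finally show ?thesis .
          next
            case False
            then show ?thesis unfolding Wt_def by simp
          qed
          have ss: "Suc (s - 1) = s" using s1 by simp
          have "(\<Sum>i<Suc (s - 1). of_nat ((N + i) choose i) * Wt N (min a c) wk i)
              = wk 0 - (\<Sum>k\<in>{Suc (s - 1)..min a c}. of_int (cf N (Suc (s - 1)) k) * wk k)"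
            by (rule solve)
          moreover have "(\<Sum>i<Suc (s - 1). of_nat ((N + i) choose i) * Wt N (min a c) wk i) = 0"
            using rel ss by simp
          ultimately have w0: "wk 0 = (\<Sum>k\<in>{s..min a c}. of_int (cf N s k) * wk k)"
            unfolding ss by simp
          have "?L * w = (\<Sum>k\<in>{s..min a c}. of_int (int (N choose b) * cf N s k) * wk k)"
            unfolding Lw2 w0 sum_distrib_left by (simp only: lin_nat lin_mult)
          also have "\<dots> = (\<Sum>k\<in>{s..min a c}. of_int (coef k * int ((N + k) choose (b + k))) * wk k)"
          proof (rule sum.cong[OF refl], rule lin_cong)
            fix k
            have cm: "((N + k) choose (b + k)) * ((b + k) choose k) = ((N + k) choose k) * ((N + k - k) choose (b + k - k))"
              by (rule choose_mult) (use False in auto)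
            have h: "int (N choose b) * int ((N + k) choose k) = int ((b + k) choose k) * int ((N + k) choose (b + k))"
              using cm by (simp only: of_nat_mult[symmetric] diff_add_inverse2 add_diff_cancel_right' mult.commute)
            have "int (N choose b) * cf N s k = ((-1) ^ (k - s) * int ((k - 1) choose (s - 1))) * (int (N choose b) * int ((N + k) choose k))"
              unfolding cf_def by (simp only: mult_ac)
            also have "\<dots> = ((-1) ^ (k - s) * int ((k - 1) choose (s - 1))) * (int ((b + k) choose k) * int ((N + k) choose (b + k)))"
              by (simp only: h)
            also have "\<dots> = coef k * int ((N + k) choose (b + k))"
              unfolding coef_def by (simp only: mult_ac)
            finally show "int (N choose b) * cf N s k = coef k * int ((N + k) choose (b + k))" .
          qed
          also have "\<dots> = ?R * w" by (rule Rw2[symmetric])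
          finally show ?thesis .
        qed
      qed
    qed
  qed
  have "?L - ?R = 0"
  proof (rule sep)
    fix z w assume "H1 * w = of_int z * w"
    then show "(?L - ?R) * w = 0" using key by (simp add: left_diff_distrib)
  qed
  then show ?thesis by simp
qed

end

lemma Q_comm:
  fixes H :: "'a::ring_1"
  shows "H * prod_list (map (\<lambda>i. H - of_nat i) L) = prod_list (map (\<lambda>i. H - of_nat i) L) * H"
proof (induction L)
  case Nil then show ?case by simp
next
  case (Cons u L)
  have "H * prod_list (map (\<lambda>i. H - of_nat i) (u # L)) = (H * (H - of_nat u)) * prod_list (map (\<lambda>i. H - of_nat i) L)"
    by (simp add: mult.assoc)
  also have "H * (H - of_nat u) = (H - of_nat u) * H" by (simp add: algebra_simps mult_of_nat_commute)
  also have "(H - of_nat u) * H * prod_list (map (\<lambda>i. H - of_nat i) L) = (H - of_nat u) * (prod_list (map (\<lambda>i. H - of_nat i) L) * H)"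
    by (simp only: mult.assoc Cons.IH)
  finally show ?case by (simp add: mult.assoc)
qed

lemma Q_comm2:
  fixes H :: "'a::ring_1"
  shows "(H - of_nat u) * prod_list (map (\<lambda>i. H - of_nat i) L) = prod_list (map (\<lambda>i. H - of_nat i) L) * (H - of_nat u)"
  by (simp add: left_diff_distrib right_diff_distrib Q_comm mult_of_nat_commute)

lemma sep_list:
  fixes H X :: "'a::ring_1"
  assumes ra: "rat_algebra TYPE('a)"
  and hyp: "\<And>z w. H * w = of_int z * w \<Longrightarrow> X * w = 0"
  shows "distinct L \<Longrightarrow> L \<noteq> [] \<Longrightarrow> prod_list (map (\<lambda>i. H - of_nat i) L) * v = 0 \<Longrightarrow> X * v = 0"
proof (induction "length L" arbitrary: L v rule: less_induct)
  case less
  let ?Q = "\<lambda>L. prod_list (map (\<lambda>i. H - of_nat i) L)"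
  show ?case
  proof (cases L)
    case Nil then show ?thesis using less.prems by simp
  next
    case (Cons u L1)
    show ?thesis
    proof (cases L1)
      case Nil
      then have "(H - of_nat u) * v = 0" using less.prems Cons by simp
      then have "H * v = of_int (int u) * v" by (simp add: algebra_simps)
      then show ?thesis by (rule hyp)
    next
      case (Cons w L2)
      have L: "L = u # w # L2" using \<open>L = u # L1\<close> Cons by simp
      have uw: "u \<noteq> w" "distinct (w # L2)" "distinct (u # L2)" using less.prems(1) L by auto
      let ?v1 = "(H - of_nat u) * v" and ?v2 = "(H - of_nat w) * v"
      have 1: "?Q (w # L2) * ?v1 = 0"
      proof -
        have "?Q (w # L2) * ?v1 = (?Q (w # L2) * (H - of_nat u)) * v" by (simp only: mult.assoc)
        also have "?Q (w # L2) * (H - of_nat u) = (H - of_nat u) * ?Q (w # L2)" by (rule Q_comm2[symmetric])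
        also have "(H - of_nat u) * ?Q (w # L2) * v = ?Q L * v" unfolding L by simp
        finally show ?thesis using less.prems(3) by simp
      qed
      have 2: "?Q (u # L2) * ?v2 = 0"
      proof -
        have "?Q (u # L2) * ?v2 = (H - of_nat u) * ((?Q L2 * (H - of_nat w)) * v)" by (simp add: mult.assoc)
        also have "?Q L2 * (H - of_nat w) = (H - of_nat w) * ?Q L2" by (rule Q_comm2[symmetric])
        also have "(H - of_nat u) * ((H - of_nat w) * ?Q L2 * v) = ?Q L * v" unfolding L by (simp add: mult.assoc)
        finally show ?thesis using less.prems(3) by simp
      qed
      have "X * ?v1 = 0" using less.hyps[of "w # L2" ?v1] uw 1 L by simp
      moreover have "X * ?v2 = 0" using less.hyps[of "u # L2" ?v2] uw 2 L by simp
      ultimately have x0: "X * (?v2 - ?v1) = 0" by (simp add: right_diff_distrib)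
      have dd: "?v2 - ?v1 = of_int (int u - int w) * v" by (simp add: algebra_simps)
      have "X * (of_int (int u - int w) * v) = 0" using x0 unfolding dd .
      then have "of_int (int u - int w) * (X * v) = 0" by (simp only: sc_int)
      moreover have "int u - int w \<noteq> 0" using uw by simp
      ultimately show ?thesis using int_cancel[OF ra] by blast
    qed
  qed
qed

lemma Bd_sl:
  fixes e f H1 H2 :: "'a::ring_1"
  assumes ra: "rat_algebra TYPE('a)" and B: "Bd_rel d e f H1 H2"
  shows "sl e f H1 H2 d"
proof -
  have P: "prod_list (map (\<lambda>i. H1 - of_nat i) [0..<Suc d]) = 0" using B unfolding Bd_rel_def by blast
  show ?thesis
  proof (unfold_locales)
    show "rat_algebra TYPE('a)" by (rule ra)
    show "H1 * e - e * H1 = e" "H1 * f - f * H1 = - f" "e * f - f * e = H1 - H2" "H1 + H2 = of_nat d"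
      using B unfolding Bd_rel_def by auto
  next
    fix w z assume w: "H1 * w = of_int z * w" and z: "z < 0 \<or> z > int d"
    have "of_int (\<Prod>i<Suc d. z - int i) * w = 0"
      using prod_eig[OF w, of "Suc d"] P by simp
    moreover have "(\<Prod>i<Suc d. z - int i) \<noteq> 0"
    proof -
      have "\<forall>i\<in>{..<Suc d}. z - int i \<noteq> 0" using z by auto
      then show ?thesis by (simp only: prod_zero_iff finite_lessThan bex_simps not_ex)
    qed
    ultimately show "w = 0" using int_cancel[OF ra] by blast
  next
    fix X :: 'a
    assume h: "\<And>z w. H1 * w = of_int z * w \<Longrightarrow> X * w = 0"
    have "X * 1 = 0" by (rule sep_list[OF ra h, where L = "[0..<Suc d]" and v = 1]) (use P in simp_all)
    then show "X = 0" by simp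
  qed
qed

lemma sl_swap:
  assumes "sl e f H1 H2 d"
  shows "sl f e H2 H1 d"
proof -
  interpret sl e f H1 H2 d by (rule assms)
  have H1d: "H1 = of_nat d - H2" using c6 by (simp add: algebra_simps)
  show ?thesis
  proof (unfold_locales)
    show "rat_algebra TYPE('a)" by (rule ra)
    show "H2 * f - f * H2 = f" unfolding H2d using c2 by (simp add: algebra_simps mult_of_nat_commute)
    show "H2 * e - e * H2 = - e" unfolding H2d using c1 by (simp add: algebra_simps mult_of_nat_commute)
    show "f * e - e * f = H2 - H1" using c5 by (simp add: algebra_simps)
    show "H2 + H1 = of_nat d" using c6 by (simp add: add.commute)
  next
    fix w z assume w: "H2 * w = of_int z * w" and z: "z < 0 \<or> z > int d"
    have "H1 * w = of_int (int d - z) * w" unfolding H1d using w by (simp add: algebra_simps)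
    moreover have "int d - z < 0 \<or> int d - z > int d" using z by auto
    ultimately show "w = 0" using van by blast
  next
    fix X assume h: "\<And>z w. H2 * w = of_int z * w \<Longrightarrow> X * w = 0"
    show "X = 0"
    proof (rule sep)
      fix z w assume "H1 * w = of_int z * w"
      then have "H2 * w = of_int (int d - z) * w" unfolding H2d by (simp add: algebra_simps)
      then show "X * w = 0" by (rule h)
    qed
  qed
qed

theorem theorem6p2:
  fixes e f H1 H2 :: "'a::ring_1" and d a b c :: nat
  assumes "rat_algebra TYPE('a)"
    and "Bd_rel d e f H1 H2"
    and "d < a + b + c"
  shows "dpow f a * binomT H2 b * dpow e c =
           (\<Sum>k\<in>{a + b + c - d..min a c}.
              of_int ((-1) ^ (k - (a + b + c - d)) * int ((k - 1) choose (a + b + c - d - 1))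
                       * int ((b + k) choose k))
              * (dpow f (a - k) * binomT H2 (b + k) * dpow e (c - k))) \<and>
         dpow e a * binomT H1 b * dpow f c =
           (\<Sum>k\<in>{a + b + c - d..min a c}.
              of_int ((-1) ^ (k - (a + b + c - d)) * int ((k - 1) choose (a + b + c - d - 1))
                       * int ((b + k) choose k))
              * (dpow e (a - k) * binomT H1 (b + k) * dpow f (c - k)))"
proof -
  have I1: "sl e f H1 H2 d" by (rule Bd_sl[OF assms(1,2)])
  have I2: "sl f e H2 H1 d" by (rule sl_swap[OF I1])
  show ?thesis using sl.main1[OF I1 assms(3)] sl.main1[OF I2 assms(3)] by blast
qed

end
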